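(* Let $P$ be the Borel probability measure on $\mathbb{R}$ with density $f(x)=\frac32$ if $x\in J_1:=[0,\frac13]$, $f(x)=\frac94$ if $x\in J_2\cup J_3$ where $J_2:=[\frac23,\frac79]$ and $J_3:=[\frac89,1]$, and $f(x)=0$ otherwise. Let $n\ge3$ and let $\alpha_n$ be an optimal set of $n$-means for $P$. Then: (i) $\alpha_n\cap J_i\neq\emptyset$ for all $1\le i\le3$; (ii) $\alpha_n$ contains no point of the open intervals $(\frac13,\frac23)$ and $(\frac79,\frac89)$; (iii) for $1\le i\neq j\le3$, the Voronoi region of any point of $\alpha_n\cap J_i$ contains no point of $J_j$.
   Context: An optimal set of $n$-means for $P$ is a set $\alpha\subset\mathbb{R}$ with $\mathrm{card}(\alpha)\le n$ attaining $\inf\{\int\min_{a\in\alpha}(x-a)^2\,dP(x):\mathrm{card}(\alpha)\le n\}$. For a finite $\alpha$ and $a\in\alpha$, the Voronoi region of $a$ is $M(a|\alpha)=\{x\in\mathbb{R}:|x-a|=\min_{b\in\alpha}|x-b|\}$. *)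

theory Defs
  imports "HOL-Analysis.Analysis"
begin

definition J :: "nat \<Rightarrow> real set" where
  "J i = (if i = 1 then {0..1/3} else if i = 2 then {2/3..7/9} else if i = 3 then {8/9..1} else {})"

definition dens :: "real \<Rightarrow> real" where
  "dens x = (if x \<in> J 1 then 3/2 else if x \<in> J 2 \<union> J 3 then 9/4 else 0)"

definition P :: "real measure" where
  "P = density lborel (\<lambda>x. ennreal (dens x))"

definition distortion :: "real set \<Rightarrow> ennreal" where
  "distortion \<alpha> = (\<integral>\<^sup>+ x. ennreal (Min ((\<lambda>a. (x - a)^2) ` \<alpha>)) \<partial>P)"

definition optimal_n_means :: "nat \<Rightarrow> real set \<Rightarrow> bool" where
  "optimal_n_means n \<alpha> \<longleftrightarrow> finite \<alpha> \<and> \<alpha> \<noteq> {} \<and> card \<alpha> \<le> n \<and>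
     (\<forall>\<beta>. finite \<beta> \<and> \<beta> \<noteq> {} \<and> card \<beta> \<le> n \<longrightarrow> distortion \<alpha> \<le> distortion \<beta>)"

definition voronoi :: "real \<Rightarrow> real set \<Rightarrow> real set" where
  "voronoi a \<alpha> = {x. \<bar>x - a\<bar> = Min ((\<lambda>b. \<bar>x - b\<bar>) ` \<alpha>)}"

end

theory Submission
  imports Defs
begin


definition mm :: "real set \<Rightarrow> real \<Rightarrow> real" where
  "mm S x = Min ((\<lambda>a. (x - a)^2) ` S)"

lemma mm_le: "finite S \<Longrightarrow> a \<in> S \<Longrightarrow> mm S x \<le> (x - a)^2"
  unfolding mm_def by (rule Min_le) auto

lemma mm_ex: "finite S \<Longrightarrow> S \<noteq> {} \<Longrightarrow> \<exists>a\<in>S. mm S x = (x - a)^2"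
proof -
  assume "finite S" "S \<noteq> {}"
  then have "mm S x \<in> (\<lambda>a. (x - a)^2) ` S" unfolding mm_def by (intro Min_in) auto
  then show ?thesis by auto
qed

lemma mm_nonneg: "finite S \<Longrightarrow> S \<noteq> {} \<Longrightarrow> 0 \<le> mm S x"
proof -
  assume "finite S" "S \<noteq> {}"
  then obtain a where "a \<in> S" "mm S x = (x - a)^2" using mm_ex by blast
  then show ?thesis by simp
qed

lemma mm_ge: "finite S \<Longrightarrow> S \<noteq> {} \<Longrightarrow> (\<And>a. a \<in> S \<Longrightarrow> c \<le> (x - a)^2) \<Longrightarrow> c \<le> mm S x"
proof -
  assume "finite S" "S \<noteq> {}" "\<And>a. a \<in> S \<Longrightarrow> c \<le> (x - a)^2"
  moreover obtain a where "a \<in> S" "mm S x = (x - a)^2" using mm_ex calculation(1,2) by blast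
  ultimately show ?thesis by simp
qed

lemma mm_cont: "finite S \<Longrightarrow> S \<noteq> {} \<Longrightarrow> continuous_on A (mm S)"
proof (induction S rule: finite_ne_induct)
  case (singleton a)
  then show ?case by (simp add: mm_def continuous_intros)
next
  case (insert a S)
  have "mm (insert a S) = (\<lambda>x. min ((x - a)^2) (mm S x))"
    using insert by (auto simp: mm_def fun_eq_iff image_insert Min_insert)
  then show ?case using insert by (auto intro!: continuous_intros)
qed

lemma mm_integrable: "finite S \<Longrightarrow> S \<noteq> {} \<Longrightarrow> mm S integrable_on {a..b}"
  by (intro integrable_continuous_real mm_cont)

definition TT :: "real set \<Rightarrow> real" where
  "TT S = 3/2 * integral {0..1/3} (mm S) + 9/4 * integral {2/3..7/9} (mm S)
     + 9/4 * integral {8/9..1} (mm S)"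

lemma dens_alt: "dens x = 3/2 * indicator {0..1/3} x + 9/4 * indicator {2/3..7/9} x
    + 9/4 * indicator {8/9..1::real} x"
  by (auto simp: dens_def J_def indicator_def)

lemma piece:
  assumes "finite S" "S \<noteq> {}" "0 \<le> c"
  shows "(\<integral>\<^sup>+ x. ennreal (c * mm S x) * indicator {a..b} x \<partial>lborel) = ennreal (c * integral {a..b} (mm S))"
proof -
  have "((\<lambda>x. c * mm S x) has_integral (c * integral {a..b} (mm S))) {a..b}"
    using mm_integrable[OF assms(1,2)] by (intro has_integral_mult_right) (simp add: integrable_integral)
  then show ?thesis
    by (intro nn_integral_has_integral_lebesgue') (use assms mm_nonneg in auto)
qed

lemma distortion_TT:
  assumes "finite S" "S \<noteq> {}"
  shows "distortion S = ennreal (TT S)"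
proof -
  have mS: "mm S \<in> borel_measurable borel"
    using mm_cont[OF assms, of UNIV] by (simp add: borel_measurable_continuous_onI)
  have dm: "(\<lambda>x. ennreal (dens x)) \<in> borel_measurable borel"
    unfolding dens_alt by measurable
  have "distortion S = (\<integral>\<^sup>+ x. ennreal (dens x) * ennreal (mm S x) \<partial>lborel)"
    unfolding distortion_def P_def mm_def[symmetric]
    by (subst nn_integral_density) (use dm mS in auto)
  also have "\<dots> = (\<integral>\<^sup>+ x. ennreal (3/2 * mm S x) * indicator {0..1/3} x
      + ennreal (9/4 * mm S x) * indicator {2/3..7/9} x
      + ennreal (9/4 * mm S x) * indicator {8/9..1} x \<partial>lborel)"
  proof (intro nn_integral_cong)
    fix x :: real
    have nn: "0 \<le> mm S x" using mm_nonneg[OF assms] .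
    show "ennreal (dens x) * ennreal (mm S x) = ennreal (3/2 * mm S x) * indicator {0..1/3} x
      + ennreal (9/4 * mm S x) * indicator {2/3..7/9} x
      + ennreal (9/4 * mm S x) * indicator {8/9..1} x"
      using nn by (auto simp: dens_def J_def indicator_def ennreal_mult'[symmetric] mult.commute)
  qed
  also have "\<dots> = ennreal (3/2 * integral {0..1/3} (mm S)) + ennreal (9/4 * integral {2/3..7/9} (mm S))
      + ennreal (9/4 * integral {8/9..1} (mm S))"
  proof -
    note [measurable] = mS
    have m1: "(\<lambda>x. ennreal (c * mm S x) * indicator {a..b} x) \<in> borel_measurable lborel" for c a b :: real
      by measurable
    show ?thesis
      by (subst nn_integral_add, (intro borel_measurable_add m1)+)+
         (simp only: piece[OF assms] nn_integral_add m1)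
  qed
  also have "\<dots> = ennreal (TT S)"
  proof -
    have i: "0 \<le> integral {a..b} (mm S)" if "a \<le> b" for a b :: real
      using mm_integrable[OF assms] mm_nonneg[OF assms] by (intro integral_nonneg) auto
    show ?thesis unfolding TT_def
      by (subst ennreal_plus[symmetric], (use i in auto)[2])+ simp
  qed
  finally show ?thesis .
qed



lemma quad_int:
  fixes a b p k :: real
  assumes "a \<le> b"
  shows "((\<lambda>x. (x - p)^2 - k) has_integral (((b-p)^3 - (a-p)^3)/3 - k*(b-a))) {a..b}"
proof -
  have d0: "((\<lambda>x. (x - p)^3/3 - k*x) has_real_derivative ((x - p)^2 - k)) (at x within {a..b})" for x
    by (rule derivative_eq_intros refl | simp add: power2_eq_square)+
  have d: "((\<lambda>x. (x - p)^3/3 - k*x) has_vector_derivative ((x - p)^2 - k)) (at x within {a..b})" for x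
    using d0[of x] unfolding has_real_derivative_iff_has_vector_derivative by simp
  have "((\<lambda>x. (x - p)^2 - k) has_integral (((b - p)^3/3 - k*b) - ((a - p)^3/3 - k*a))) {a..b}"
    by (rule fundamental_theorem_of_calculus[OF assms d])
  then show ?thesis by (simp add: algebra_simps diff_divide_distrib)
qed

definition ww :: "real \<Rightarrow> real \<Rightarrow> real \<Rightarrow> real \<Rightarrow> real" where
  "ww s t h p = ((min t (p + h/2) - p)^3 - (max s (p - h/2) - p)^3)/3
      - h^2/4 * (min t (p + h/2) - max s (p - h/2))"

lemma ww_ge0:
  assumes "s - h/2 < p" "p < t + h/2" "0 < h"
  shows "ww s t h p + h^3/6 = (2*(min t (p + h/2) - p) - h)^2 * ((min t (p + h/2) - p) + h)/12
     + (2*(max s (p - h/2) - p) + h)^2*(h - (max s (p - h/2) - p))/12"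
proof -
  define y where "y = min t (p + h/2) - p"
  define z where "z = max s (p - h/2) - p"
  have w: "ww s t h p = (y^3 - z^3)/3 - h^2/4*(y - z)"
    by (simp add: ww_def y_def z_def)
  have "ww s t h p + h^3/6 = (2*y - h)^2 * (y + h)/12 + (2*z + h)^2*(h - z)/12"
    unfolding w by (simp add: power2_eq_square power3_eq_cube field_simps)
  then show ?thesis by (simp add: y_def z_def)
qed

lemma ww_ge:
  assumes "s - h/2 < p" "p < t + h/2" "0 < h"
  shows "ww s t h p \<ge> - (h^3/6)"
proof -
  define y where "y = min t (p + h/2) - p"
  define z where "z = max s (p - h/2) - p"
  have y1: "y \<le> h/2" "y > -h/2" using assms by (auto simp: y_def min_def)
  have z1: "z \<ge> -h/2" "z < h/2" using assms by (auto simp: z_def max_def)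
  have A: "(2*y - h)^2 * (y + h)/12 \<ge> 0" using y1 by auto
  have B: "(2*z + h)^2*(h - z)/12 \<ge> 0" using z1 by auto
  show ?thesis using ww_ge0[OF assms] A B unfolding y_def z_def by linarith
qed

lemma ww_gt:
  assumes "s - h/2 < p" "p < t + h/2" "0 < h" "p < s + h/2 \<or> t - h/2 < p"
  shows "ww s t h p > - (h^3/6)"
proof -
  define y where "y = min t (p + h/2) - p"
  define z where "z = max s (p - h/2) - p"
  have y1: "y \<le> h/2" "y > -h/2" using assms by (auto simp: y_def min_def)
  have z1: "z \<ge> -h/2" "z < h/2" using assms by (auto simp: z_def max_def)
  have A: "(2*y - h)^2 * (y + h)/12 \<ge> 0" using y1 by auto
  have B: "(2*z + h)^2*(h - z)/12 \<ge> 0" using z1 by auto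
  have "z > -h/2 \<or> y < h/2" using assms by (auto simp: y_def z_def min_def max_def)
  then have "(2*y - h)^2 * (y + h)/12 > 0 \<or> (2*z + h)^2*(h - z)/12 > 0"
    using y1 z1 by (auto intro!: mult_pos_pos divide_pos_pos)
  then show ?thesis using ww_ge0[OF assms(1-3)] A B unfolding y_def z_def by linarith
qed


lemma sq_le_of_abs: "\<bar>y\<bar> \<le> c \<Longrightarrow> (y::real)^2 \<le> c^2"
  by (metis abs_ge_zero abs_le_square_iff abs_of_nonneg order_trans)

lemma abs_lt_of_sq: "(y::real)^2 < c^2 \<Longrightarrow> 0 \<le> c \<Longrightarrow> \<bar>y\<bar> < c"
  by (metis abs_of_nonneg abs_le_square_iff not_less)

lemma window:
  assumes fin: "finite S" "S \<noteq> {}" and st: "s \<le> t" and h: "0 < h"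
  shows "h^2*(t-s)/4 + (\<Sum>p\<in>S \<inter> {s-h/2<..<t+h/2}. ww s t h p) \<le> integral {s..t} (mm S)"
proof -
  define A where "A = S \<inter> {s-h/2<..<t+h/2}"
  define u where "u p = max s (p - h/2)" for p
  define v where "v p = min t (p + h/2)" for p
  have finA: "finite A" using fin by (simp add: A_def)
  have uv: "s \<le> u p" "u p \<le> v p" "v p \<le> t" if "p \<in> A" for p
    using that st h by (auto simp: A_def u_def v_def)
  define g where "g x = h^2/4 + (\<Sum>p\<in>A. if x \<in> {u p..v p} then (x-p)^2 - h^2/4 else 0)" for x
  have ti: "((\<lambda>x. if x \<in> {u p..v p} then (x-p)^2 - h^2/4 else 0) has_integral ww s t h p) {s..t}"
    if "p \<in> A" for p
  proof -
    have sub: "{u p..v p} \<subseteq> {s..t}" using uv[OF that] by auto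
    have "((\<lambda>x. (x-p)^2 - h^2/4) has_integral ww s t h p) {u p..v p}"
      using quad_int[OF uv(2)[OF that], of p "h^2/4"] by (simp add: ww_def u_def v_def)
    then show ?thesis by (subst has_integral_restrict[OF sub])
  qed
  have c: "((\<lambda>x. h^2/4) has_integral ((t-s)*h^2/4)) {s..t}"
    using has_integral_const_real[of "h^2/4" s t] st by simp
  have sm: "((\<lambda>x. \<Sum>p\<in>A. if x \<in> {u p..v p} then (x-p)^2 - h^2/4 else 0) has_integral (\<Sum>p\<in>A. ww s t h p)) {s..t}"
    by (rule has_integral_sum[OF finA ti])
  have gi: "(g has_integral ((t-s)*h^2/4 + (\<Sum>p\<in>A. ww s t h p))) {s..t}"
    unfolding g_def by (rule has_integral_add[OF c sm])
  have le: "g x \<le> mm S x" if "x \<in> {s..t}" for x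
  proof -
    obtain q where q: "q \<in> S" "mm S x = (x - q)^2" using mm_ex[OF fin] by blast
    have np: "(if x \<in> {u p..v p} then (x-p)^2 - h^2/4 else 0) \<le> 0" for p
    proof (cases "x \<in> {u p..v p}")
      case True
      then have "\<bar>x - p\<bar> \<le> h/2" by (auto simp: u_def v_def abs_if)
      then have "(x-p)^2 \<le> (h/2)^2" by (rule sq_le_of_abs)
      moreover have "(h/2)^2 = h^2/4" by (simp add: power_divide)
      ultimately have "(x-p)^2 - h^2/4 \<le> 0" by linarith
      then show ?thesis using True by simp
    qed (simp del: atLeastAtMost_iff)
    show ?thesis
    proof (cases "(x-q)^2 < (h/2)^2")
      case False
      have "g x \<le> h^2/4" unfolding g_def using np by (simp add: sum_nonpos)
      moreover have "(h/2)^2 = h^2/4" by (simp add: power_divide)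
      ultimately show ?thesis using False q by linarith
    next
      case True
      then have aq: "\<bar>x - q\<bar> < h/2" using h by (intro abs_lt_of_sq) auto
      have a1: "x - q < h/2" "q - x < h/2" using aq abs_less_iff[of "x-q" "h/2"] by auto
      have xst: "s \<le> x" "x \<le> t" using that by auto
      have b1: "s - h/2 < q" "q < t + h/2" using a1 xst by linarith+
      have qA: "q \<in> A" using b1 q by (simp add: A_def)
      have b2: "q - h/2 \<le> x" "x \<le> q + h/2" using a1 by linarith+
      have xq: "x \<in> {u q..v q}" using b2 xst by (simp add: u_def v_def)
      define F where "F p = (if x \<in> {u p..v p} then (x-p)^2 - h^2/4 else 0)" for p
      have Fq: "F q = (x-q)^2 - h^2/4" using xq by (simp add: F_def)
      have Fn: "F p \<le> 0" for p unfolding F_def by (rule np)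
      have "g x = h^2/4 + (\<Sum>p\<in>A. F p)" unfolding g_def F_def by (rule refl)
      also have "\<dots> = h^2/4 + (F q + (\<Sum>p\<in>A-{q}. F p))" by (simp only: sum.remove[OF finA qA])
      also have "\<dots> \<le> h^2/4 + (F q + 0)"
        using sum_nonpos[of "A-{q}" F] Fn by (intro add_left_mono) auto
      also have "\<dots> = (x-q)^2" using Fq by simp
      finally show ?thesis using q by simp
    qed
  qed
  have mi: "(mm S has_integral integral {s..t} (mm S)) {s..t}"
    using mm_integrable[OF fin] by (simp add: integrable_integral)
  have e1: "(t-s)*h^2/4 = h^2*(t-s)/4" by simp
  have X: "(t-s)*h^2/4 + (\<Sum>p\<in>A. ww s t h p) \<le> integral {s..t} (mm S)"
    using has_integral_le[OF gi mi le] .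
  show ?thesis using X e1 unfolding A_def by linarith
qed



lemma window2:
  assumes fin: "finite S" "S \<noteq> {}" and st: "s \<le> t" and h: "0 < h"
    and k: "card (S \<inter> {s-h/2<..<t+h/2}) \<le> k"
  shows "h^2*(t-s)/4 - k*(h^3/6) \<le> integral {s..t} (mm S)"
    and "(\<exists>p\<in>S \<inter> {s-h/2<..<t+h/2}. p < s + h/2 \<or> t - h/2 < p) \<or> card (S \<inter> {s-h/2<..<t+h/2}) < k
      \<Longrightarrow> h^2*(t-s)/4 - k*(h^3/6) < integral {s..t} (mm S)"
proof -
  define A where "A = S \<inter> {s-h/2<..<t+h/2}"
  have finA: "finite A" using fin by (simp add: A_def)
  have ge: "- (h^3/6) \<le> ww s t h p" if "p \<in> A" for p
    using that h by (intro ww_ge) (auto simp: A_def)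
  have s1: "(\<Sum>p\<in>A. - (h^3/6)) \<le> (\<Sum>p\<in>A. ww s t h p)"
    by (rule sum_mono[OF ge])
  have s2: "(\<Sum>p\<in>A. - (h^3/6)) = - (card A * (h^3/6))" by simp
  have kk: "card A * (h^3/6) \<le> k * (h^3/6)"
    using k h by (intro mult_right_mono) (auto simp: A_def)
  have W: "h^2*(t-s)/4 + (\<Sum>p\<in>A. ww s t h p) \<le> integral {s..t} (mm S)"
    using window[OF fin st h] by (simp add: A_def)
  show "h^2*(t-s)/4 - k*(h^3/6) \<le> integral {s..t} (mm S)"
    using W s1 s2 kk by linarith
  assume as: "(\<exists>p\<in>S \<inter> {s-h/2<..<t+h/2}. p < s + h/2 \<or> t - h/2 < p) \<or> card (S \<inter> {s-h/2<..<t+h/2}) < k"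
  show "h^2*(t-s)/4 - k*(h^3/6) < integral {s..t} (mm S)"
  proof (cases "card A < k")
    case True
    then have "card A * (h^3/6) < k * (h^3/6)" using h by (intro mult_strict_right_mono) auto
    then show ?thesis using W s1 s2 by linarith
  next
    case False
    then obtain p where p: "p \<in> A" "p < s + h/2 \<or> t - h/2 < p" using as by (auto simp: A_def)
    have gt: "- (h^3/6) < ww s t h p"
      using p h by (intro ww_gt) (auto simp: A_def)
    have "(\<Sum>p\<in>A. - (h^3/6)) < (\<Sum>p\<in>A. ww s t h p)"
      by (rule sum_strict_mono_ex1[OF finA]) (use ge gt p in auto)
    then show ?thesis using W s2 kk by linarith
  qed
qed

lemma window_grid:
  assumes fin: "finite S" "S \<noteq> {}" and st: "s < t" and N: "1 \<le> N"
    and k: "card (S \<inter> {s-(t-s)/2<..<t+(t-s)/2}) \<le> N"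
  shows "(t-s)^3/(12*(real N)^2) \<le> integral {s..t} (mm S)"
    and "(\<exists>p\<in>S \<inter> {s-(t-s)/2<..<t+(t-s)/2}. p < s + (t-s)/real N/2 \<or> t - (t-s)/real N/2 < p)
      \<Longrightarrow> (t-s)^3/(12*(real N)^2) < integral {s..t} (mm S)"
proof -
  define h where "h = (t-s)/N"
  have h: "0 < h" using st N by (simp add: h_def)
  have hle: "h \<le> t - s" unfolding h_def
    using divide_left_mono[of 1 "real N" "t - s"] st N by simp
  have sub: "S \<inter> {s-h/2<..<t+h/2} \<subseteq> S \<inter> {s-(t-s)/2<..<t+(t-s)/2}" using hle by (auto simp: field_simps)
  have c: "card (S \<inter> {s-h/2<..<t+h/2}) \<le> card (S \<inter> {s-(t-s)/2<..<t+(t-s)/2})"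
    using fin by (intro card_mono sub) auto
  have eq0: "((t-s)/N)^2*(t-s)/4 - N*(((t-s)/N)^3/6) = (t-s)^3/(12*(real N)^2)"
    using N by (simp add: field_simps power2_eq_square power3_eq_cube)
  have eq: "h^2*(t-s)/4 - N*(h^3/6) = (t-s)^3/(12*(real N)^2)"
    unfolding h_def by (rule eq0)
  have k': "card (S \<inter> {s-h/2<..<t+h/2}) \<le> N" using c k by linarith
  have st': "s \<le> t" using st by simp
  show "(t-s)^3/(12*(real N)^2) \<le> integral {s..t} (mm S)"
    using window2(1)[OF fin st' h k'] eq by linarith
  assume "\<exists>p\<in>S \<inter> {s-(t-s)/2<..<t+(t-s)/2}. p < s + (t-s)/real N/2 \<or> t - (t-s)/real N/2 < p"
  then obtain p where p: "p \<in> S" "s-(t-s)/2 < p" "p < t+(t-s)/2" "p < s + h/2 \<or> t - h/2 < p"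
    by (auto simp: h_def)
  have "(\<exists>p\<in>S \<inter> {s-h/2<..<t+h/2}. p < s + h/2 \<or> t - h/2 < p) \<or> card (S \<inter> {s-h/2<..<t+h/2}) < N"
  proof (cases "p \<in> {s-h/2<..<t+h/2}")
    case True then show ?thesis using p by auto
  next
    case False
    then have "S \<inter> {s-h/2<..<t+h/2} \<subset> S \<inter> {s-(t-s)/2<..<t+(t-s)/2}" using sub p by auto
    then have "card (S \<inter> {s-h/2<..<t+h/2}) < card (S \<inter> {s-(t-s)/2<..<t+(t-s)/2})"
      using fin by (intro psubset_card_mono) auto
    then show ?thesis using k by auto
  qed
  then have "h^2*(t-s)/4 - N*(h^3/6) < integral {s..t} (mm S)"
    by (rule window2(2)[OF fin st' h k'])
  then show "(t-s)^3/(12*(real N)^2) < integral {s..t} (mm S)"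
    using eq by linarith
qed

lemma int_lb:
  assumes "(f has_integral I) {a..b}" "\<And>x. x \<in> {a..b} \<Longrightarrow> f x \<le> mm S x" "finite S" "S \<noteq> {}"
  shows "I \<le> integral {a..b} (mm S)"
  using has_integral_le[OF assms(1) _ assms(2)] mm_integrable[OF assms(3,4)]
  by (simp add: integrable_integral)

lemma int_ub:
  assumes "(f has_integral I) {a..b}" "\<And>x. x \<in> {a..b} \<Longrightarrow> mm S x \<le> f x" "finite S" "S \<noteq> {}"
  shows "integral {a..b} (mm S) \<le> I"
  using has_integral_le[OF _ assms(1) assms(2)] mm_integrable[OF assms(3,4)]
  by (simp add: integrable_integral)

lemma zero_lemma:
  assumes fin: "finite S" "S \<noteq> {}" and st: "s \<le> t"
    and e: "S \<inter> {s-(t-s)/2<..<t+(t-s)/2} = {}"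
  shows "7*(t-s)^3/12 \<le> integral {s..t} (mm S)"
proof -
  define L where "L = t - s"
  define m where "m = (s+t)/2"
  define p0 where "p0 = s - L/2"
  define p1 where "p1 = t + L/2"
  have out: "a \<le> p0 \<or> p1 \<le> a" if "a \<in> S" for a
    using e that by (force simp: p0_def p1_def L_def)
  have i1: "((\<lambda>x. (x - p0)^2 - 0) has_integral (((m-p0)^3 - (s-p0)^3)/3 - 0*(m-s))) {s..m}"
    using st by (intro quad_int) (simp add: m_def)
  have i2: "((\<lambda>x. (x - p1)^2 - 0) has_integral (((t-p1)^3 - (m-p1)^3)/3 - 0*(t-m))) {m..t}"
    using st by (intro quad_int) (simp add: m_def)
  have l1: "((m-p0)^3 - (s-p0)^3)/3 - 0*(m-s) \<le> integral {s..m} (mm S)"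
  proof (rule int_lb[OF i1 _ fin])
    fix x assume x: "x \<in> {s..m}"
    show "(x - p0)^2 - 0 \<le> mm S x"
    proof (rule mm_ge[OF fin])
      fix a assume a: "a \<in> S"
      have xs: "s \<le> x" "x \<le> m" using x by auto
      have "0 \<le> x - p0" using xs st unfolding p0_def L_def by (simp add: field_simps)
      moreover have "x - p0 \<le> \<bar>x - a\<bar>"
        using out[OF a] x by (auto simp: p0_def p1_def m_def L_def)
      ultimately show "(x - p0)^2 - 0 \<le> (x - a)^2"
        by (metis abs_le_square_iff abs_of_nonneg diff_zero)
    qed
  qed
  have l2: "((t-p1)^3 - (m-p1)^3)/3 - 0*(t-m) \<le> integral {m..t} (mm S)"
  proof (rule int_lb[OF i2 _ fin])
    fix x assume x: "x \<in> {m..t}"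
    show "(x - p1)^2 - 0 \<le> mm S x"
    proof (rule mm_ge[OF fin])
      fix a assume a: "a \<in> S"
      have xs: "m \<le> x" "x \<le> t" using x by auto
      have "0 \<le> p1 - x" using xs st unfolding p1_def L_def by (simp add: field_simps)
      moreover have "p1 - x \<le> \<bar>x - a\<bar>"
        using out[OF a] x by (auto simp: p0_def p1_def m_def L_def)
      ultimately show "(x - p1)^2 - 0 \<le> (x - a)^2"
        by (metis abs_le_square_iff abs_of_nonneg diff_zero abs_minus_commute)
    qed
  qed
  have comb: "integral {s..m} (mm S) + integral {m..t} (mm S) = integral {s..t} (mm S)"
    using Henstock_Kurzweil_Integration.integral_combine[where a=s and c=m and b=t and f="mm S"] mm_integrable[OF fin, of s t] st by (simp add: m_def)
  have v: "((m-p0)^3 - (s-p0)^3)/3 - 0*(m-s) + (((t-p1)^3 - (m-p1)^3)/3 - 0*(t-m)) = 7*(t-s)^3/12"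
    by (simp add: m_def p0_def p1_def L_def power3_eq_cube field_simps)
  show ?thesis using l1 l2 comb v by linarith
qed



lemma sq_mono_abs: "\<bar>u\<bar> \<le> \<bar>v\<bar> \<Longrightarrow> (u::real)^2 \<le> v^2"
  by (simp add: abs_le_square_iff)

lemma grid_ub:
  assumes fin: "finite S" "S \<noteq> {}" and st: "s < t" and k: "1 \<le> k"
    and G: "\<And>j. j < k \<Longrightarrow> s + (real j + 1/2) * ((t - s)/k) \<in> S"
  shows "integral {s..t} (mm S) \<le> (t-s)^3/(12*(real k)^2)"
proof -
  define h where "h = (t - s)/k"
  have h: "0 < h" using st k by (simp add: h_def)
  have step: "integral {s + j*h..s + (j+1)*h} (mm S) \<le> h^3/12" if "j < k" for j :: nat
  proof -
    define a where "a = s + j*h"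
    define c where "c = a + h/2"
    have c: "c \<in> S" using G[OF that] by (simp add: c_def a_def h_def algebra_simps)
    have e: "s + (j+1)*h = a + h" by (simp add: a_def algebra_simps)
    have i: "((\<lambda>x. (x - c)^2 - 0) has_integral (((a+h-c)^3 - (a-c)^3)/3 - 0*(a+h-a))) {a..a+h}"
      using h by (intro quad_int) simp
    have "integral {a..a+h} (mm S) \<le> ((a+h-c)^3 - (a-c)^3)/3 - 0*(a+h-a)"
      by (rule int_ub[OF i _ fin]) (use mm_le[OF fin(1) c] in simp)
    also have "\<dots> = h^3/12" by (simp add: c_def power3_eq_cube field_simps)
    finally have r: "integral {a..a+h} (mm S) \<le> h^3/12" .
    have e2: "s + (j+1)*h = a + h" "s + j*h = a" by (simp_all add: a_def algebra_simps)
    show ?thesis unfolding e2 by (rule r)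
  qed
  have ind: "j \<le> k \<Longrightarrow> integral {s..s + j*h} (mm S) \<le> j*(h^3/12)" for j :: nat
  proof (induction j)
    case 0 then show ?case by simp
  next
    case (Suc j)
    have "integral {s..s + j*h} (mm S) + integral {s + j*h..s + (j+1)*h} (mm S) = integral {s..s + (j+1)*h} (mm S)"
      using Henstock_Kurzweil_Integration.integral_combine[where a=s and c="s+j*h" and b="s+(j+1)*h" and f="mm S"]
        mm_integrable[OF fin] h by (simp add: algebra_simps)
    moreover have "integral {s..s + j*h} (mm S) \<le> j*(h^3/12)" using Suc by simp
    moreover have "integral {s + j*h..s + (j+1)*h} (mm S) \<le> h^3/12" using step Suc by simp
    ultimately show ?case by (simp add: algebra_simps)
  qed
  have "s + real k * h = t" using k by (simp add: h_def)
  then have "integral {s..t} (mm S) \<le> k*(h^3/12)" using ind[of k] by simp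
  also have "\<dots> = (t-s)^3/(12*(real k)^2)" using k
    by (simp add: h_def power3_eq_cube power2_eq_square field_simps)
  finally show ?thesis .
qed

lemma br1:
  assumes fin: "finite S" "S \<noteq> {}" and q: "1/2 \<le> q" "q \<le> 5/6"
    and S: "\<And>a. a \<in> S \<Longrightarrow> a < 1/2 \<or> a = q"
  shows "26/3888 \<le> 9/4*(integral {2/3..7/9} (mm S) + integral {8/9..1} (mm S))"
proof -
  have pw: "(x - q)^2 - 0 \<le> mm S x" if "2/3 \<le> x" for x
  proof (rule mm_ge[OF fin])
    fix a assume a: "a \<in> S"
    show "(x - q)^2 - 0 \<le> (x - a)^2"
    proof (cases "a = q")
      case False
      then have "a < 1/2" using S[OF a] by auto
      then have "\<bar>x - q\<bar> \<le> \<bar>x - a\<bar>" using q that by (auto simp: abs_if)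
      then show ?thesis using sq_mono_abs by simp
    qed simp
  qed
  have i2: "((\<lambda>x. (x - q)^2 - 0) has_integral (((7/9-q)^3 - (2/3-q)^3)/3 - 0*(7/9-2/3))) {2/3..7/9}"
    by (intro quad_int) simp
  have i3: "((\<lambda>x. (x - q)^2 - 0) has_integral (((1-q)^3 - (8/9-q)^3)/3 - 0*(1-8/9))) {8/9..1}"
    by (intro quad_int) simp
  have l2: "((7/9-q)^3 - (2/3-q)^3)/3 - 0*(7/9-2/3) \<le> integral {2/3..7/9} (mm S)"
    by (rule int_lb[OF i2 _ fin]) (use pw in auto)
  have l3: "((1-q)^3 - (8/9-q)^3)/3 - 0*(1-8/9) \<le> integral {8/9..1} (mm S)"
    by (rule int_lb[OF i3 _ fin]) (use pw in auto)
  have e: "((7/9-q)^3 - (2/3-q)^3)/3 - 0*(7/9-2/3) + (((1-q)^3 - (8/9-q)^3)/3 - 0*(1-8/9))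
      = 13/4374 + 2/9*(q-5/6)^2"
    by (simp add: power2_eq_square power3_eq_cube field_simps)
  have "0 \<le> 2/9*(q-5/6)^2" by simp
  then have "13/4374 \<le> integral {2/3..7/9} (mm S) + integral {8/9..1} (mm S)" using l2 l3 e by linarith
  then show ?thesis by simp
qed

lemma br2:
  assumes fin: "finite S" "S \<noteq> {}" and q: "5/6 < q" "q \<le> 8/9"
    and S: "\<And>a. a \<in> S \<Longrightarrow> a < 1/2 \<or> a = q"
  shows "17/3888 \<le> 9/4*(integral {2/3..7/9} (mm S) + integral {8/9..1} (mm S))"
proof -
  have pw2: "(x - 5/6)^2 - 0 \<le> mm S x" if "x \<in> {2/3..7/9}" for x
  proof (rule mm_ge[OF fin])
    fix a assume a: "a \<in> S"
    have "\<bar>x - 5/6\<bar> \<le> \<bar>x - a\<bar>" using S[OF a] q that by (auto simp: abs_if)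
    then show "(x - 5/6)^2 - 0 \<le> (x - a)^2" using sq_mono_abs by simp
  qed
  have pw3: "(x - 8/9)^2 - 0 \<le> mm S x" if "x \<in> {8/9..1}" for x
  proof (rule mm_ge[OF fin])
    fix a assume a: "a \<in> S"
    have "\<bar>x - 8/9\<bar> \<le> \<bar>x - a\<bar>" using S[OF a] q that by (auto simp: abs_if)
    then show "(x - 8/9)^2 - 0 \<le> (x - a)^2" using sq_mono_abs by simp
  qed
  have i2: "((\<lambda>x::real. (x - 5/6)^2 - 0) has_integral (((7/9-5/6)^3 - (2/3-5/6)^3)/3 - 0*(7/9-2/3))) {2/3..7/9}"
    by (intro quad_int) simp
  have i3: "((\<lambda>x::real. (x - 8/9)^2 - 0) has_integral (((1-8/9)^3 - (8/9-8/9)^3)/3 - 0*(1-8/9))) {8/9..1}"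
    by (intro quad_int) simp
  have l2: "((7/9-5/6)^3 - (2/3-5/6)^3)/3 - 0*(7/9-2/3) \<le> integral {2/3..7/9} (mm S)"
    by (rule int_lb[OF i2 pw2 fin])
  have l3: "((1-8/9)^3 - (8/9-8/9)^3)/3 - 0*(1-8/9) \<le> integral {8/9..1} (mm S)"
    by (rule int_lb[OF i3 pw3 fin])
  show ?thesis using l2 l3 by (simp add: power3_eq_cube)
qed

lemma br3:
  assumes fin: "finite S" "S \<noteq> {}" and q: "8/9 < q"
    and S: "\<And>a. a \<in> S \<Longrightarrow> a < 1/2 \<or> a = q"
  shows "17/3888 \<le> 9/4*(integral {2/3..7/9} (mm S) + integral {8/9..1} (mm S))"
proof -
  have pwa: "1/36 \<le> mm S x" if "x \<in> {2/3..13/18}" for x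
  proof (rule mm_ge[OF fin])
    fix a assume a: "a \<in> S"
    have "\<bar>1/6\<bar> \<le> \<bar>x - a\<bar>" using S[OF a] q that by (auto simp: abs_if)
    then have "(1/6)^2 \<le> (x - a)^2" using sq_mono_abs by blast
    then show "1/36 \<le> (x - a)^2" by (simp add: power2_eq_square)
  qed
  have pwb: "(x - 8/9)^2 - 0 \<le> mm S x" if "x \<in> {13/18..7/9}" for x
  proof (rule mm_ge[OF fin])
    fix a assume a: "a \<in> S"
    have "\<bar>x - 8/9\<bar> \<le> \<bar>x - a\<bar>" using S[OF a] q that by (auto simp: abs_if)
    then show "(x - 8/9)^2 - 0 \<le> (x - a)^2" using sq_mono_abs by simp
  qed
  have ia: "((\<lambda>x::real. (1/36::real)) has_integral ((13/18 - 2/3) * (1/36::real))) {2/3..13/18::real}"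
    using has_integral_const_real[of "1/36::real" "2/3" "13/18"] by simp
  have ib: "((\<lambda>x::real. (x - 8/9)^2 - 0) has_integral (((7/9-8/9)^3 - (13/18-8/9)^3)/3 - 0*(7/9-13/18))) {13/18..7/9}"
    by (intro quad_int) simp
  have la: "(13/18 - 2/3) * (1/36) \<le> integral {2/3..13/18} (mm S)"
    by (rule int_lb[OF ia pwa fin])
  have lb: "((7/9-8/9)^3 - (13/18-8/9)^3)/3 - 0*(7/9-13/18) \<le> integral {13/18..7/9} (mm S)"
    by (rule int_lb[OF ib pwb fin])
  have comb: "integral {2/3..13/18} (mm S) + integral {13/18..7/9} (mm S) = integral {2/3..7/9} (mm S)"
    using Henstock_Kurzweil_Integration.integral_combine[where a="2/3" and c="13/18" and b="7/9" and f="mm S"]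
      mm_integrable[OF fin] by simp
  have l3: "0 \<le> integral {8/9..1} (mm S)"
    using mm_integrable[OF fin] mm_nonneg[OF fin] by (intro integral_nonneg) auto
  show ?thesis using la lb comb l3 by (simp add: power3_eq_cube)
qed

lemma S_lemma:
  assumes fin: "finite S" "S \<noteq> {}" and S: "\<And>a. a \<in> S \<Longrightarrow> 1/2 \<le> a \<Longrightarrow> a = q"
  shows "17/3888 \<le> 9/4*(integral {2/3..7/9} (mm S) + integral {8/9..1} (mm S))"
proof -
  consider "q < 1/2" | "1/2 \<le> q" "q \<le> 5/6" | "5/6 < q" "q \<le> 8/9" | "8/9 < q" by linarith
  then show ?thesis
  proof cases
    case 1
    have "\<And>a. a \<in> S \<Longrightarrow> a < 1/2 \<or> a = 1/2" using S 1 by force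
    then show ?thesis using br1[OF fin, of "1/2"] by simp
  next
    case 2
    have "\<And>a. a \<in> S \<Longrightarrow> a < 1/2 \<or> a = q" using S by force
    then show ?thesis using br1[OF fin 2] by simp
  next
    case 3
    have "\<And>a. a \<in> S \<Longrightarrow> a < 1/2 \<or> a = q" using S by force
    then show ?thesis using br2[OF fin 3] by simp
  next
    case 4
    have "\<And>a. a \<in> S \<Longrightarrow> a < 1/2 \<or> a = q" using S by force
    then show ?thesis using br3[OF fin 4] by simp
  qed
qed

lemma S_lemma0:
  assumes fin: "finite S" "S \<noteq> {}" and S: "\<And>a. a \<in> S \<Longrightarrow> a < 1/2"
  shows "26/3888 \<le> 9/4*(integral {2/3..7/9} (mm S) + integral {8/9..1} (mm S))"
  using br1[OF fin, of "1/2"] S by simp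



definition FF :: "nat \<Rightarrow> nat \<Rightarrow> nat \<Rightarrow> real" where
  "FF k1 k2 k3 = 1/216 * (1/(real k1)^2) + 1/3888 * (1/(real k2)^2) + 1/3888 * (1/(real k3)^2)"

lemma int_nonneg: "finite S \<Longrightarrow> S \<noteq> {} \<Longrightarrow> a \<le> b \<Longrightarrow> 0 \<le> integral {a..b} (mm S)"
  using mm_integrable mm_nonneg by (intro integral_nonneg) auto

lemma TT_nonneg: "finite S \<Longrightarrow> S \<noteq> {} \<Longrightarrow> 0 \<le> TT S"
  unfolding TT_def using int_nonneg[of S] by (simp add: add_nonneg_nonneg)

lemma opt_le:
  assumes "optimal_n_means n \<alpha>" "finite \<beta>" "\<beta> \<noteq> {}" "card \<beta> \<le> n"
  shows "TT \<alpha> \<le> TT \<beta>"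
proof -
  have a: "finite \<alpha>" "\<alpha> \<noteq> {}" using assms(1) by (auto simp: optimal_n_means_def)
  have "distortion \<alpha> \<le> distortion \<beta>" using assms by (auto simp: optimal_n_means_def)
  then have "ennreal (TT \<alpha>) \<le> ennreal (TT \<beta>)"
    by (simp add: distortion_TT[OF a] distortion_TT[OF assms(2,3)])
  then show ?thesis using TT_nonneg[OF assms(2,3)] by (simp add: ennreal_le_iff)
qed

definition GG :: "real \<Rightarrow> real \<Rightarrow> nat \<Rightarrow> real set" where
  "GG s t k = (\<lambda>j. s + (real j + 1/2) * ((t - s)/k)) ` {..<k}"

lemma GG_props: "finite (GG s t k)" "card (GG s t k) \<le> k" "1 \<le> k \<Longrightarrow> GG s t k \<noteq> {}"
  "j < k \<Longrightarrow> s + (real j + 1/2) * ((t - s)/k) \<in> GG s t k"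
  unfolding GG_def using card_image_le[of "{..<k}"] by (auto simp: lessThan_empty_iff)

lemma UB:
  assumes opt: "optimal_n_means n \<alpha>" and k: "1 \<le> k1" "1 \<le> k2" "1 \<le> k3" "k1 + k2 + k3 \<le> n"
  shows "TT \<alpha> \<le> FF k1 k2 k3"
proof -
  define \<beta> where "\<beta> = GG 0 (1/3) k1 \<union> GG (2/3) (7/9) k2 \<union> GG (8/9) 1 k3"
  have fb: "finite \<beta>" by (simp add: \<beta>_def GG_props)
  have nb: "\<beta> \<noteq> {}" using GG_props(3)[OF k(1)] by (simp add: \<beta>_def)
  have cb: "card \<beta> \<le> n"
  proof -
    have "card \<beta> \<le> card (GG 0 (1/3) k1 \<union> GG (2/3) (7/9) k2) + card (GG (8/9) 1 k3)"
      unfolding \<beta>_def by (rule card_Un_le)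
    also have "\<dots> \<le> card (GG 0 (1/3) k1) + card (GG (2/3) (7/9) k2) + card (GG (8/9) 1 k3)"
      using card_Un_le by (intro add_right_mono) blast
    also have "\<dots> \<le> k1 + k2 + k3" using GG_props(2) by (intro add_mono) auto
    finally show ?thesis using k by linarith
  qed
  have g1: "integral {0..1/3} (mm \<beta>) \<le> (1/3 - 0)^3/(12*(real k1)^2)"
    by (rule grid_ub[OF fb nb _ k(1)]) (simp, unfold \<beta>_def, use GG_props(4)[of _ k1 "0" "1/3"] in blast)
  have g2: "integral {2/3..7/9} (mm \<beta>) \<le> (7/9 - 2/3)^3/(12*(real k2)^2)"
    by (rule grid_ub[OF fb nb _ k(2)]) (simp, unfold \<beta>_def, use GG_props(4)[of _ k2 "2/3" "7/9"] in blast)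
  have g3: "integral {8/9..1} (mm \<beta>) \<le> (1 - 8/9)^3/(12*(real k3)^2)"
    by (rule grid_ub[OF fb nb _ k(3)]) (simp, unfold \<beta>_def, use GG_props(4)[of _ k3 "8/9" "1"] in blast)
  have "TT \<beta> \<le> FF k1 k2 k3"
    unfolding TT_def FF_def using g1 g2 g3 by (simp add: power3_eq_cube field_simps)
  then show ?thesis using opt_le[OF opt fb nb cb] by linarith
qed



lemma Jb:
  assumes fin: "finite S" "S \<noteq> {}" and st: "s < t" and U: "U = {s-(t-s)/2<..<t+(t-s)/2}"
    and N: "N = card (S \<inter> U)" and c: "0 < c"
  shows "1 \<le> N \<Longrightarrow> c*(t-s)^3/12 * (1/(real N)^2) \<le> c * integral {s..t} (mm S)"
    and "N = 0 \<Longrightarrow> 7*(c*(t-s)^3/12) \<le> c * integral {s..t} (mm S)"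
    and "1 \<le> N \<Longrightarrow> p \<in> S \<inter> U \<Longrightarrow> p < s + (t-s)/real N/2 \<or> t - (t-s)/real N/2 < p
           \<Longrightarrow> c*(t-s)^3/12 * (1/(real N)^2) < c * integral {s..t} (mm S)"
proof -
  have e: "c*(t-s)^3/12 * (1/(real N)^2) = c * ((t-s)^3/(12*(real N)^2))" by simp
  {
    assume N1: "1 \<le> N"
    have k: "card (S \<inter> {s-(t-s)/2<..<t+(t-s)/2}) \<le> N" using N U by simp
    show "c*(t-s)^3/12 * (1/(real N)^2) \<le> c * integral {s..t} (mm S)"
      unfolding e using window_grid(1)[OF fin st N1 k] c by (intro mult_left_mono) auto
    assume p: "p \<in> S \<inter> U" "p < s + (t-s)/real N/2 \<or> t - (t-s)/real N/2 < p"
    have "(t-s)^3/(12*(real N)^2) < integral {s..t} (mm S)"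
      by (rule window_grid(2)[OF fin st N1 k]) (use p U in blast)
    then show "c*(t-s)^3/12 * (1/(real N)^2) < c * integral {s..t} (mm S)"
      unfolding e using c by (intro mult_strict_left_mono) auto
  }
  assume N0: "N = 0"
  then have "S \<inter> U = {}" using N fin by simp
  then have "7*(t-s)^3/12 \<le> integral {s..t} (mm S)"
    using zero_lemma[OF fin] st U by auto
  then show "7*(c*(t-s)^3/12) \<le> c * integral {s..t} (mm S)"
    using c mult_left_mono[of "7*(t-s)^3/12" "integral {s..t} (mm S)" c] by (simp add: algebra_simps)
qed

lemma inv_sq1: "1 \<le> k \<Longrightarrow> 0 < 1/(real k)^2 \<and> 1/(real k)^2 \<le> 1"
  by (simp add: field_simps)

lemma inv_sq2: "2 \<le> k \<Longrightarrow> 1/(real k)^2 \<le> 1/4"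
proof -
  assume "2 \<le> k"
  then have a: "(2::real)^2 \<le> (real k)^2" by (intro power_mono) auto
  have b: "0 < (real k)^2" using \<open>2 \<le> k\<close> by simp
  show ?thesis using a b by (simp add: divide_simps)
qed

lemma inv_sq_mono: "1 \<le> k \<Longrightarrow> 1/(real (k+1))^2 < 1/(real k)^2"
  by (simp add: field_simps power_strict_mono)

lemma arith:
  fixes N1 N2 N3 n :: nat and X1 X2 X3 :: real
  assumes n3: "3 \<le> n" and sumN: "N1 + N2 + N3 \<le> n"
    and UB: "\<And>k1 k2 k3. 1 \<le> k1 \<Longrightarrow> 1 \<le> k2 \<Longrightarrow> 1 \<le> k3 \<Longrightarrow> k1+k2+k3 \<le> n \<Longrightarrow> X1+X2+X3 \<le> FF k1 k2 k3"
    and L1: "1 \<le> N1 \<Longrightarrow> 1/216 * (1/(real N1)^2) \<le> X1" and Z1: "N1 = 0 \<Longrightarrow> 7/216 \<le> X1"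
    and L2: "1 \<le> N2 \<Longrightarrow> 1/3888 * (1/(real N2)^2) \<le> X2" and Z2: "N2 = 0 \<Longrightarrow> 7/3888 \<le> X2"
    and L3: "1 \<le> N3 \<Longrightarrow> 1/3888 * (1/(real N3)^2) \<le> X3" and Z3: "N3 = 0 \<Longrightarrow> 7/3888 \<le> X3"
    and SP: "n = 3 \<Longrightarrow> 2 \<le> N1 \<Longrightarrow> 17/3888 \<le> X2 + X3"
    and SP0: "n = 3 \<Longrightarrow> N1 = 3 \<Longrightarrow> 26/3888 \<le> X2 + X3"
  shows "1 \<le> N1 \<and> 1 \<le> N2 \<and> 1 \<le> N3"
proof -
  have F111: "FF 1 1 1 = 20/3888" by (simp add: FF_def)
  have U111: "X1+X2+X3 \<le> 20/3888" using UB[of 1 1 1] n3 F111 by simp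
  have X2n: "0 \<le> X2" using L2 Z2 inv_sq1[of N2] by (cases "N2 = 0") (auto intro: order_trans[rotated])
  have X3n: "0 \<le> X3" using L3 Z3 inv_sq1[of N3] by (cases "N3 = 0") (auto intro: order_trans[rotated])
  have X1n: "0 \<le> X1" using L1 Z1 inv_sq1[of N1] by (cases "N1 = 0") (auto intro: order_trans[rotated])
  have N1p: "1 \<le> N1"
  proof (rule ccontr)
    assume "\<not> 1 \<le> N1" then have "N1 = 0" by simp
    then show False using Z1 U111 X2n X3n by linarith
  qed
  have L1': "1/216 * (1/(real N1)^2) \<le> X1" using L1 N1p by simp
  have B1: "1/(real N1)^2 \<le> 1" using inv_sq1[OF N1p] by simp
  have N23: "1 \<le> N2 \<and> 1 \<le> N3"
  proof (rule ccontr)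
    assume as: "\<not> (1 \<le> N2 \<and> 1 \<le> N3)"
    have lowP: "7/3888 + 1/216 * (1/(real N1)^2) \<le> X1 + X2 + X3"
    proof (cases "N2 = 0")
      case True then show ?thesis using Z2 L1' X3n by linarith
    next
      case False then have "N3 = 0" using as by simp
      then show ?thesis using Z3 L1' X2n by linarith
    qed
    show False
    proof (cases "N2 = 0 \<and> N3 = 0")
      case True
      have low: "14/3888 + 1/216 * (1/(real N1)^2) \<le> X1 + X2 + X3" using True Z2 Z3 L1' by simp
      consider "N1 + 2 \<le> n" | "N1 + 1 = n" | "N1 = n" using sumN True by linarith
      then show False
      proof cases
        case 1
        have "X1+X2+X3 \<le> FF N1 1 1" using UB[of N1 1 1] N1p 1 by simp
        then show False using low by (simp add: FF_def)
      next
        case 2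
        show False
        proof (cases "N1 \<ge> 3")
          case True
          have "X1+X2+X3 \<le> FF (N1-1) 1 1" using UB[of "N1-1" 1 1] True 2 by simp
          moreover have "1/(real (N1-1))^2 \<le> 1/4" using True by (intro inv_sq2) simp
          ultimately show False using low inv_sq1[OF N1p] by (simp add: FF_def)
        next
          case False
          then have "N1 = 2" "n = 3" using 2 n3 by auto
          then show False using SP L1 U111 by simp
        qed
      next
        case 3
        show False
        proof (cases "N1 \<ge> 4")
          case True
          have "X1+X2+X3 \<le> FF (N1-2) 1 1" using UB[of "N1-2" 1 1] True 3 by simp
          moreover have "1/(real (N1-2))^2 \<le> 1/4" using True by (intro inv_sq2) simp
          ultimately show False using low inv_sq1[OF N1p] by (simp add: FF_def)
        next
          case False
          then have "N1 = 3" "n = 3" using 3 n3 by auto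
          then show False using SP0 L1 U111 by simp
        qed
      qed
    next
      case False
      define M where "M = (if N2 = 0 then N3 else N2)"
      have M1: "1 \<le> M" using False as by (auto simp: M_def)
      have low: "7/3888 + 1/216 * (1/(real N1)^2) + 1/3888 * (1/(real M)^2) \<le> X1 + X2 + X3"
        using False as Z2 Z3 L1' L2 L3 by (auto simp: M_def split: if_splits)
      have UBM: "X1+X2+X3 \<le> FF k1 1 k3" if "1 \<le> k1" "1 \<le> k3" "k1 + k3 + 1 \<le> n" for k1 k3
      proof (cases "N2 = 0")
        case True
        then show ?thesis using UB[of k1 1 k3] that by simp
      next
        case False
        have "X1+X2+X3 \<le> FF k1 k3 1" using UB[of k1 k3 1] that by simp
        then show ?thesis by (simp add: FF_def)
      qed
      have sM: "N1 + M \<le> n" using sumN False as by (auto simp: M_def)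
      consider "N1 + M + 1 \<le> n" | "N1 + M = n" using sM by linarith
      then show False
      proof cases
        case 1
        have "X1+X2+X3 \<le> FF N1 1 M" using UBM[OF N1p M1] 1 by simp
        then show False using low by (simp add: FF_def)
      next
        case 2
        show False
        proof (cases "M \<ge> 2")
          case True
          have "X1+X2+X3 \<le> FF N1 1 (M-1)" using UBM[OF N1p, of "M-1"] True 2 by simp
          moreover have "1/(real (M-1))^2 \<le> 1" using True by (intro conjunct2[OF inv_sq1]) simp
          ultimately show False using low inv_sq1[OF M1] by (simp add: FF_def)
        next
          case False
          then have M: "M = 1" using M1 by simp
          show False
          proof (cases "N1 \<ge> 3")
            case True
            have "X1+X2+X3 \<le> FF (N1-1) 1 1" using UBM[of "N1-1" 1] True 2 M by simp
            moreover have "1/(real (N1-1))^2 \<le> 1/4" using True by (intro inv_sq2) simp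
            ultimately show False using low inv_sq1[OF N1p] M by (simp add: FF_def)
          next
            case False
            then have "N1 = 2" "n = 3" using 2 M n3 by auto
            then show False using SP L1 U111 by simp
          qed
        qed
      qed
    qed
  qed
  show ?thesis using N1p N23 by simp
qed



theorem proposition5p7:
  fixes n :: nat and \<alpha> :: "real set"
  assumes "n \<ge> 3" and "optimal_n_means n \<alpha>"
  shows "(\<forall>i\<in>{1,2,3}. \<alpha> \<inter> J i \<noteq> {})
       \<and> \<alpha> \<inter> ({1/3<..<2/3} \<union> {7/9<..<8/9}) = {}
       \<and> (\<forall>i\<in>{1,2,3}. \<forall>j\<in>{1,2,3}. i \<noteq> j \<longrightarrow>
            (\<forall>a\<in>\<alpha> \<inter> J i. voronoi a \<alpha> \<inter> J j = {}))"
proof -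
  note opt = assms(2)
  have fin: "finite \<alpha>" and ne: "\<alpha> \<noteq> {}" and cn: "card \<alpha> \<le> n"
    using opt by (auto simp: optimal_n_means_def)
  define U1 where "U1 = {-1/6<..<1/2::real}"
  define U2 where "U2 = {11/18<..<5/6::real}"
  define U3 where "U3 = {5/6<..<19/18::real}"
  define N1 where "N1 = card (\<alpha> \<inter> U1)"
  define N2 where "N2 = card (\<alpha> \<inter> U2)"
  define N3 where "N3 = card (\<alpha> \<inter> U3)"
  define X1 where "X1 = 3/2 * integral {0..1/3} (mm \<alpha>)"
  define X2 where "X2 = 9/4 * integral {2/3..7/9} (mm \<alpha>)"
  define X3 where "X3 = 9/4 * integral {8/9..1} (mm \<alpha>)"
  have TTe: "TT \<alpha> = X1 + X2 + X3" by (simp add: TT_def X1_def X2_def X3_def)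
  have U1e: "U1 = {0-(1/3-0)/2<..<1/3+(1/3-0)/2}" by (simp add: U1_def)
  have U2e: "U2 = {2/3-(7/9-2/3)/2<..<7/9+(7/9-2/3)/2}" by (simp add: U2_def)
  have U3e: "U3 = {8/9-(1-8/9)/2<..<1+(1-8/9)/2}" by (simp add: U3_def)
  have st1: "(0::real) < 1/3" and st2: "(2/3::real) < 7/9" and st3: "(8/9::real) < 1"
    and c1: "(0::real) < 3/2" and c2: "(0::real) < 9/4" by auto
  note J1 = Jb[OF fin ne st1 U1e N1_def c1]
  note J2 = Jb[OF fin ne st2 U2e N2_def c2]
  note J3 = Jb[OF fin ne st3 U3e N3_def c2]
  have L1: "1 \<le> N1 \<Longrightarrow> 1/216 * (1/(real N1)^2) \<le> X1" using J1(1) by (simp add: X1_def power3_eq_cube)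
  have Z1: "N1 = 0 \<Longrightarrow> 7/216 \<le> X1" using J1(2) by (simp add: X1_def power3_eq_cube)
  have L2: "1 \<le> N2 \<Longrightarrow> 1/3888 * (1/(real N2)^2) \<le> X2" using J2(1) by (simp add: X2_def power3_eq_cube)
  have Z2: "N2 = 0 \<Longrightarrow> 7/3888 \<le> X2" using J2(2) by (simp add: X2_def power3_eq_cube)
  have L3: "1 \<le> N3 \<Longrightarrow> 1/3888 * (1/(real N3)^2) \<le> X3" using J3(1) by (simp add: X3_def power3_eq_cube)
  have Z3: "N3 = 0 \<Longrightarrow> 7/3888 \<le> X3" using J3(2) by (simp add: X3_def power3_eq_cube)
  have UBa: "X1+X2+X3 \<le> FF k1 k2 k3" if "1 \<le> k1" "1 \<le> k2" "1 \<le> k3" "k1+k2+k3 \<le> n" for k1 k2 k3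
    using UB[OF opt that] TTe by simp
  have disj: "U1 \<inter> U2 = {}" "U1 \<inter> U3 = {}" "U2 \<inter> U3 = {}" by (auto simp: U1_def U2_def U3_def)
  have cU: "N1 + N2 + N3 = card (\<alpha> \<inter> (U1 \<union> U2 \<union> U3))"
  proof -
    have "card (\<alpha> \<inter> (U1 \<union> U2 \<union> U3)) = card ((\<alpha> \<inter> U1 \<union> \<alpha> \<inter> U2) \<union> \<alpha> \<inter> U3)"
      by (simp add: Int_Un_distrib)
    also have "\<dots> = card (\<alpha> \<inter> U1 \<union> \<alpha> \<inter> U2) + card (\<alpha> \<inter> U3)"
      using fin disj by (intro card_Un_disjoint) auto
    also have "card (\<alpha> \<inter> U1 \<union> \<alpha> \<inter> U2) = card (\<alpha> \<inter> U1) + card (\<alpha> \<inter> U2)"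
      using fin disj by (intro card_Un_disjoint) auto
    finally show ?thesis by (simp add: N1_def N2_def N3_def)
  qed
  have sumN: "N1 + N2 + N3 \<le> n"
    using cU card_mono[OF fin, of "\<alpha> \<inter> (U1 \<union> U2 \<union> U3)"] cn by auto
  have X23: "X2 + X3 = 9/4*(integral {2/3..7/9} (mm \<alpha>) + integral {8/9..1} (mm \<alpha>))"
    by (simp add: X2_def X3_def algebra_simps)
  have SP: "17/3888 \<le> X2 + X3" if n3: "n = 3" and N12: "2 \<le> N1"
  proof -
    have "card (\<alpha> - U1) = card \<alpha> - N1"
      unfolding N1_def using fin by (intro card_Diff_subset_Int) auto
    then have c1: "card (\<alpha> - U1) \<le> Suc 0" using cn n3 N12 by linarith
    have one: "a1 = a2" if "a1 \<in> \<alpha> - U1" "a2 \<in> \<alpha> - U1" for a1 a2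
      using c1 that card_le_Suc0_iff_eq[of "\<alpha> - U1"] fin by auto
    obtain q where q: "\<And>a. a \<in> \<alpha> \<Longrightarrow> 1/2 \<le> a \<Longrightarrow> a = q"
    proof (cases "\<exists>a\<in>\<alpha>. 1/2 \<le> a")
      case True
      then obtain a0 where a0: "a0 \<in> \<alpha>" "1/2 \<le> a0" by blast
      show ?thesis
      proof (rule that[of a0])
        fix a assume "a \<in> \<alpha>" "1/2 \<le> a"
        then show "a = a0" using one[of a a0] a0 by (auto simp: U1_def)
      qed
    next
      case False then show ?thesis using that by force
    qed
    show ?thesis unfolding X23 by (rule S_lemma[OF fin ne q])
  qed
  have SP0: "26/3888 \<le> X2 + X3" if n3: "n = 3" and N13: "N1 = 3"
  proof -
    have "card (\<alpha> \<inter> U1) = card \<alpha>" using cn n3 N13 card_mono[OF fin, of "\<alpha> \<inter> U1"] by (simp add: N1_def)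
    then have "\<alpha> \<inter> U1 = \<alpha>" using fin by (intro card_subset_eq) auto
    then have "\<And>a. a \<in> \<alpha> \<Longrightarrow> a < 1/2" by (auto simp: U1_def)
    then show ?thesis unfolding X23 by (rule S_lemma0[OF fin ne])
  qed
  have Npos: "1 \<le> N1 \<and> 1 \<le> N2 \<and> 1 \<le> N3"
    by (rule arith[OF assms(1) sumN UBa L1 Z1 L2 Z2 L3 Z3 SP SP0])
  have FN: "FF N1 N2 N3 \<le> X1 + X2 + X3" using L1 L2 L3 Npos by (simp add: FF_def)
  have UN: "X1 + X2 + X3 \<le> FF N1 N2 N3" using UBa[of N1 N2 N3] Npos sumN by simp
  have cover: "p \<in> U1 \<union> U2 \<union> U3" if p: "p \<in> \<alpha>" for p
  proof (rule ccontr)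
    assume "p \<notin> U1 \<union> U2 \<union> U3"
    then have "\<alpha> \<inter> (U1 \<union> U2 \<union> U3) \<subset> \<alpha>" using p by auto
    then have "card (\<alpha> \<inter> (U1 \<union> U2 \<union> U3)) < card \<alpha>" using fin by (intro psubset_card_mono) auto
    then have "(N1 + 1) + N2 + N3 \<le> n" using cU cn by linarith
    then have "X1+X2+X3 \<le> FF (N1+1) N2 N3" using UBa[of "N1+1" N2 N3] Npos by simp
    moreover have "1/(real (N1+1))^2 < 1/(real N1)^2" using inv_sq_mono Npos by blast
    ultimately show False using FN by (simp add: FF_def)
  qed
  have pos1: "1/3/real N1/2 \<le> p \<and> p \<le> 1/3 - 1/3/real N1/2" if p: "p \<in> \<alpha> \<inter> U1" for p
  proof (rule ccontr)
    assume "\<not> ?thesis"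
    then have "p < 0 + (1/3 - 0)/real N1/2 \<or> 1/3 - (1/3 - 0)/real N1/2 < p" by auto
    then have "1/216 * (1/(real N1)^2) < X1" using J1(3)[OF _ p] Npos by (simp add: X1_def power3_eq_cube)
    then show False using L2 L3 Npos UN by (simp add: FF_def)
  qed
  have pos2: "2/3 + 1/9/real N2/2 \<le> p \<and> p \<le> 7/9 - 1/9/real N2/2" if p: "p \<in> \<alpha> \<inter> U2" for p
  proof (rule ccontr)
    assume "\<not> ?thesis"
    then have "p < 2/3 + (7/9 - 2/3)/real N2/2 \<or> 7/9 - (7/9 - 2/3)/real N2/2 < p" by auto
    then have "1/3888 * (1/(real N2)^2) < X2" using J2(3)[OF _ p] Npos by (simp add: X2_def power3_eq_cube)
    then show False using L1 L3 Npos UN by (simp add: FF_def)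
  qed
  have pos3: "8/9 + 1/9/real N3/2 \<le> p \<and> p \<le> 1 - 1/9/real N3/2" if p: "p \<in> \<alpha> \<inter> U3" for p
  proof (rule ccontr)
    assume "\<not> ?thesis"
    then have "p < 8/9 + (1 - 8/9)/real N3/2 \<or> 1 - (1 - 8/9)/real N3/2 < p" by auto
    then have "1/3888 * (1/(real N3)^2) < X3" using J3(3)[OF _ p] Npos by (simp add: X3_def power3_eq_cube)
    then show False using L1 L2 Npos UN by (simp add: FF_def)
  qed
  have d1: "0 < 1/3/real N1/2" "0 < 1/9/real N2/2" "0 < 1/9/real N3/2" using Npos by auto
  have ex1: "\<alpha> \<inter> U1 \<noteq> {}" "\<alpha> \<inter> U2 \<noteq> {}" "\<alpha> \<inter> U3 \<noteq> {}"
    using Npos by (auto simp: N1_def N2_def N3_def)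
  have Jm1: "x \<in> J 1 \<longleftrightarrow> 0 \<le> x \<and> x \<le> 1/3" for x by (simp add: J_def)
  have Jm2: "x \<in> J 2 \<longleftrightarrow> 2/3 \<le> x \<and> x \<le> 7/9" for x by (simp add: J_def)
  have Jm3: "x \<in> J 3 \<longleftrightarrow> 8/9 \<le> x \<and> x \<le> 1" for x by (simp add: J_def)
  have absI: "\<bar>x - b\<bar> < c" if "x - b < c" "b - x < c" for x b c :: real
    using that by (simp add: abs_less_iff)
  have inJ: "(0 < p \<and> p < 1/3) \<or> (2/3 < p \<and> p < 7/9) \<or> (8/9 < p \<and> p < 1)" if p: "p \<in> \<alpha>" for p
  proof -
    consider "p \<in> U1" | "p \<in> U2" | "p \<in> U3" using cover[OF p] by blast
    then show ?thesis
    proof cases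
      case 1
      then have "1/3/real N1/2 \<le> p \<and> p \<le> 1/3 - 1/3/real N1/2" using pos1 p by blast
      then show ?thesis using d1(1) by linarith
    next
      case 2
      then have "2/3 + 1/9/real N2/2 \<le> p \<and> p \<le> 7/9 - 1/9/real N2/2" using pos2 p by blast
      then show ?thesis using d1(2) by linarith
    next
      case 3
      then have "8/9 + 1/9/real N3/2 \<le> p \<and> p \<le> 1 - 1/9/real N3/2" using pos3 p by blast
      then show ?thesis using d1(3) by linarith
    qed
  qed
  obtain b1 where b1: "b1 \<in> \<alpha> \<inter> U1" using ex1 by blast
  obtain b2 where b2: "b2 \<in> \<alpha> \<inter> U2" using ex1 by blast
  obtain b3 where b3: "b3 \<in> \<alpha> \<inter> U3" using ex1 by blast
  have pb1: "1/3/real N1/2 \<le> b1 \<and> b1 \<le> 1/3 - 1/3/real N1/2" using pos1[OF b1] .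
  have pb2: "2/3 + 1/9/real N2/2 \<le> b2 \<and> b2 \<le> 7/9 - 1/9/real N2/2" using pos2[OF b2] .
  have pb3: "8/9 + 1/9/real N3/2 \<le> b3 \<and> b3 \<le> 1 - 1/9/real N3/2" using pos3[OF b3] .
  have bJ: "b1 \<in> J 1" "b2 \<in> J 2" "b3 \<in> J 3"
    unfolding Jm1 Jm2 Jm3 using pb1 pb2 pb3 d1 by linarith+
  have B1: "\<bar>x - b1\<bar> < 1/3" if "x \<in> J 1" for x
    using that pb1 d1(1) unfolding Jm1 by (intro absI) linarith+
  have B2: "\<bar>x - b2\<bar> < 1/9" if "x \<in> J 2" for x
    using that pb2 d1(2) unfolding Jm2 by (intro absI) linarith+
  have B3: "\<bar>x - b3\<bar> < 1/9" if "x \<in> J 3" for x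
    using that pb3 d1(3) unfolding Jm3 by (intro absI) linarith+
  have part1: "\<forall>i\<in>{1,2,3}. \<alpha> \<inter> J i \<noteq> {}"
    using b1 b2 b3 bJ by auto
  have part2: "\<alpha> \<inter> ({1/3<..<2/3} \<union> {7/9<..<8/9}) = {}"
  proof -
    have "p \<notin> {1/3<..<2/3} \<union> {7/9<..<8/9}" if "p \<in> \<alpha>" for p
      using inJ[OF that] by auto
    then show ?thesis by blast
  qed
  have part3: "\<forall>i\<in>{1,2,3}. \<forall>j\<in>{1,2,3}. i \<noteq> j \<longrightarrow> (\<forall>a\<in>\<alpha> \<inter> J i. voronoi a \<alpha> \<inter> J j = {})"
  proof (intro ballI impI equalityI subsetI)
    fix i j :: nat and a x
    assume i: "i \<in> {1,2,3}" and j: "j \<in> {1,2,3}" and ij: "i \<noteq> j" and a: "a \<in> \<alpha> \<inter> J i"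
      and x: "x \<in> voronoi a \<alpha> \<inter> J j"
    have xJ: "x \<in> J j" and xv: "\<bar>x - a\<bar> = Min ((\<lambda>b. \<bar>x - b\<bar>) ` \<alpha>)"
      using x by (auto simp: voronoi_def)
    have aJ: "a \<in> J i" using a by auto
    have r1: "x - a \<le> \<bar>x - a\<bar>" "a - x \<le> \<bar>x - a\<bar>" by auto
    obtain b where b: "b \<in> \<alpha>" and close: "\<bar>x - b\<bar> < \<bar>x - a\<bar>"
    proof -
      consider "i = 1" "j = 2" | "i = 1" "j = 3" | "i = 2" "j = 1" | "i = 2" "j = 3"
        | "i = 3" "j = 1" | "i = 3" "j = 2" using i j ij by auto
      then show ?thesis
      proof cases
        case 1
        have xJ': "x \<in> J 2" using xJ 1 by blast
        have aJ': "a \<in> J 1" using aJ 1 by blast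
        have xb: "\<bar>x - b2\<bar> < 1/9" using B2[OF xJ'] .
        have "1/3 \<le> \<bar>x - a\<bar>" using xJ' aJ' r1 unfolding Jm1 Jm2 Jm3 by linarith
        then show ?thesis using that b2 xb by force
      next
        case 2
        have xJ': "x \<in> J 3" using xJ 2 by blast
        have aJ': "a \<in> J 1" using aJ 2 by blast
        have xb: "\<bar>x - b3\<bar> < 1/9" using B3[OF xJ'] .
        have "1/3 \<le> \<bar>x - a\<bar>" using xJ' aJ' r1 unfolding Jm1 Jm2 Jm3 by linarith
        then show ?thesis using that b3 xb by force
      next
        case 3
        have xJ': "x \<in> J 1" using xJ 3 by blast
        have aJ': "a \<in> J 2" using aJ 3 by blast
        have xb: "\<bar>x - b1\<bar> < 1/3" using B1[OF xJ'] .
        have "1/3 \<le> \<bar>x - a\<bar>" using xJ' aJ' r1 unfolding Jm1 Jm2 Jm3 by linarith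
        then show ?thesis using that b1 xb by force
      next
        case 4
        have xJ': "x \<in> J 3" using xJ 4 by blast
        have aJ': "a \<in> J 2" using aJ 4 by blast
        have xb: "\<bar>x - b3\<bar> < 1/9" using B3[OF xJ'] .
        have "1/9 \<le> \<bar>x - a\<bar>" using xJ' aJ' r1 unfolding Jm1 Jm2 Jm3 by linarith
        then show ?thesis using that b3 xb by force
      next
        case 5
        have xJ': "x \<in> J 1" using xJ 5 by blast
        have aJ': "a \<in> J 3" using aJ 5 by blast
        have xb: "\<bar>x - b1\<bar> < 1/3" using B1[OF xJ'] .
        have "1/3 \<le> \<bar>x - a\<bar>" using xJ' aJ' r1 unfolding Jm1 Jm2 Jm3 by linarith
        then show ?thesis using that b1 xb by force
      next
        case 6
        have xJ': "x \<in> J 2" using xJ 6 by blast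
        have aJ': "a \<in> J 3" using aJ 6 by blast
        have xb: "\<bar>x - b2\<bar> < 1/9" using B2[OF xJ'] .
        have "1/9 \<le> \<bar>x - a\<bar>" using xJ' aJ' r1 unfolding Jm1 Jm2 Jm3 by linarith
        then show ?thesis using that b2 xb by force
      qed
    qed
    have "Min ((\<lambda>b. \<bar>x - b\<bar>) ` \<alpha>) \<le> \<bar>x - b\<bar>" using fin b by (intro Min_le) auto
    then show "x \<in> {}" using close xv by linarith
  qed simp
  show ?thesis using part1 part2 part3 by blast
qed


end
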